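(* Let $H$ be a hyperring, $i:A\to B$ a strict injective morphism of $H$-modules (identify $A$ with $i(A)$, a submodule of $B$), and $C$ a submodule of $A$. Let $j:A\to A/C$ and $j':B\to B/C$ be the quotient maps. Then the induced map $i':A/C\to B/C$, $[x]\mapsto[i(x)]$, is a well-defined strict injective morphism, and the square with top $i$, left $j$, right $j'$, bottom $i'$ is both a pullback and a pushout in $\mathrm{Mod}_H$.
   Context: A hyperaddition on a set $M$ is a commutative map $M\times M\to\{$nonempty subsets of $M\}$; for subsets $X+Y=\bigcup_{x\in X,y\in Y}(x+y)$, and elements are identified with singletons. A hypergroup: $(a+b)+c=a+(b+c)$; unique $0$ with $a+0=\{a\}$; unique $-a$ with $0\in a+(-a)$; $a\in b+c\Rightarrow c\in a+(-b)$. A hyperring is a hypergroup with commutative monoid multiplication distributing over hyperaddition. An $H$-module is a hypergroup $M$ with $H\times M\to M$ such that $1m=m$, $0m=0$, $(xy)m=x(ym)$, $x(m_1+m_2)=xm_1+xm_2$, $(x+y)m=xm+ym$. A morphism satisfies $f(0)=0$, $f(rm)=rf(m)$, $f(a+b)\subseteq f(a)+f(b)$; it is strict if equality holds. A submodule of $M$ is a subset $N$ containing $0$, closed under negatives and scalar multiplication, with $a+b\subseteq N$ for all $a,b\in N$. For a submodule $C$ of $B$, $B/C$ is the set of classes of $b_1\equiv b_2\iff b_1+C=b_2+C$, with hyperaddition $[x]+[y]=\{[z]: z\in x'+y', x'\equiv x, y'\equiv y\}$ and action $r[x]=[rx]$. *)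

theory Defs
  imports Main
begin

record 'a hgroup =
  hcarrier :: "'a set"
  hadd :: "'a \<Rightarrow> 'a \<Rightarrow> 'a set"
  hzero :: 'a
  hneg :: "'a \<Rightarrow> 'a"

record 'r hring = "'r hgroup" +
  hmul :: "'r \<Rightarrow> 'r \<Rightarrow> 'r"
  hone :: 'r

record ('a, 'r) hmod = "'a hgroup" +
  smul :: "'r \<Rightarrow> 'a \<Rightarrow> 'a"

definition setadd :: "('a, 'z) hgroup_scheme \<Rightarrow> 'a set \<Rightarrow> 'a set \<Rightarrow> 'a set" where
  "setadd G X Y = (\<Union>x\<in>X. \<Union>y\<in>Y. hadd G x y)"

definition hypergroup :: "('a, 'z) hgroup_scheme \<Rightarrow> bool" where
  "hypergroup G \<longleftrightarrow>
     (\<forall>a\<in>hcarrier G. \<forall>b\<in>hcarrier G. hadd G a b \<noteq> {} \<and> hadd G a b \<subseteq> hcarrier G) \<and>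
     (\<forall>a\<in>hcarrier G. \<forall>b\<in>hcarrier G. hadd G a b = hadd G b a) \<and>
     (\<forall>a\<in>hcarrier G. \<forall>b\<in>hcarrier G. \<forall>c\<in>hcarrier G.
         setadd G (hadd G a b) {c} = setadd G {a} (hadd G b c)) \<and>
     hzero G \<in> hcarrier G \<and>
     (\<forall>a\<in>hcarrier G. hadd G a (hzero G) = {a}) \<and>
     (\<forall>z\<in>hcarrier G. (\<forall>a\<in>hcarrier G. hadd G a z = {a}) \<longrightarrow> z = hzero G) \<and>
     (\<forall>a\<in>hcarrier G. hneg G a \<in> hcarrier G \<and> hzero G \<in> hadd G a (hneg G a)) \<and>
     (\<forall>a\<in>hcarrier G. \<forall>b\<in>hcarrier G. hzero G \<in> hadd G a b \<longrightarrow> b = hneg G a) \<and>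
     (\<forall>a\<in>hcarrier G. \<forall>b\<in>hcarrier G. \<forall>c\<in>hcarrier G.
         a \<in> hadd G b c \<longrightarrow> c \<in> hadd G a (hneg G b))"

definition hyperring :: "'r hring \<Rightarrow> bool" where
  "hyperring H \<longleftrightarrow> hypergroup H \<and>
     (\<forall>x\<in>hcarrier H. \<forall>y\<in>hcarrier H. hmul H x y \<in> hcarrier H) \<and>
     (\<forall>x\<in>hcarrier H. \<forall>y\<in>hcarrier H. \<forall>z\<in>hcarrier H.
         hmul H (hmul H x y) z = hmul H x (hmul H y z)) \<and>
     (\<forall>x\<in>hcarrier H. \<forall>y\<in>hcarrier H. hmul H x y = hmul H y x) \<and>
     hone H \<in> hcarrier H \<and>
     (\<forall>x\<in>hcarrier H. hmul H (hone H) x = x) \<and>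
     (\<forall>x\<in>hcarrier H. \<forall>y\<in>hcarrier H. \<forall>z\<in>hcarrier H.
         hmul H x ` hadd H y z = hadd H (hmul H x y) (hmul H x z))"

definition hmodule :: "'r hring \<Rightarrow> ('a, 'r) hmod \<Rightarrow> bool" where
  "hmodule H M \<longleftrightarrow> hyperring H \<and> hypergroup M \<and>
     (\<forall>r\<in>hcarrier H. \<forall>m\<in>hcarrier M. smul M r m \<in> hcarrier M) \<and>
     (\<forall>m\<in>hcarrier M. smul M (hone H) m = m) \<and>
     (\<forall>m\<in>hcarrier M. smul M (hzero H) m = hzero M) \<and>
     (\<forall>x\<in>hcarrier H. \<forall>y\<in>hcarrier H. \<forall>m\<in>hcarrier M.
         smul M (hmul H x y) m = smul M x (smul M y m)) \<and>
     (\<forall>x\<in>hcarrier H. \<forall>m1\<in>hcarrier M. \<forall>m2\<in>hcarrier M.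
         smul M x ` hadd M m1 m2 = hadd M (smul M x m1) (smul M x m2)) \<and>
     (\<forall>x\<in>hcarrier H. \<forall>y\<in>hcarrier H. \<forall>m\<in>hcarrier M.
         (\<lambda>r. smul M r m) ` hadd H x y = hadd M (smul M x m) (smul M y m))"

definition hmorphism :: "'r hring \<Rightarrow> ('a, 'r) hmod \<Rightarrow> ('b, 'r) hmod \<Rightarrow> ('a \<Rightarrow> 'b) \<Rightarrow> bool" where
  "hmorphism H M N f \<longleftrightarrow>
     (\<forall>m\<in>hcarrier M. f m \<in> hcarrier N) \<and>
     f (hzero M) = hzero N \<and>
     (\<forall>r\<in>hcarrier H. \<forall>m\<in>hcarrier M. f (smul M r m) = smul N r (f m)) \<and>
     (\<forall>a\<in>hcarrier M. \<forall>b\<in>hcarrier M. f ` hadd M a b \<subseteq> hadd N (f a) (f b))"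

definition strict_hmorphism :: "'r hring \<Rightarrow> ('a, 'r) hmod \<Rightarrow> ('b, 'r) hmod \<Rightarrow> ('a \<Rightarrow> 'b) \<Rightarrow> bool" where
  "strict_hmorphism H M N f \<longleftrightarrow> hmorphism H M N f \<and>
     (\<forall>a\<in>hcarrier M. \<forall>b\<in>hcarrier M. f ` hadd M a b = hadd N (f a) (f b))"

definition hsubmodule :: "'r hring \<Rightarrow> ('a, 'r) hmod \<Rightarrow> 'a set \<Rightarrow> bool" where
  "hsubmodule H M N \<longleftrightarrow> N \<subseteq> hcarrier M \<and> hzero M \<in> N \<and>
     (\<forall>a\<in>N. hneg M a \<in> N) \<and>
     (\<forall>r\<in>hcarrier H. \<forall>a\<in>N. smul M r a \<in> N) \<and>
     (\<forall>a\<in>N. \<forall>b\<in>N. hadd M a b \<subseteq> N)"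

definition qclass :: "('a, 'r) hmod \<Rightarrow> 'a set \<Rightarrow> 'a \<Rightarrow> 'a set" where
  "qclass M C x = {y \<in> hcarrier M. setadd M {y} C = setadd M {x} C}"

definition quot :: "('a, 'r) hmod \<Rightarrow> 'a set \<Rightarrow> ('a set, 'r) hmod" where
  "quot M C = \<lparr> hcarrier = qclass M C ` hcarrier M,
     hadd = (\<lambda>X Y. {qclass M C z | z x' y'. x' \<in> X \<and> y' \<in> Y \<and> z \<in> hadd M x' y'}),
     hzero = qclass M C (hzero M),
     hneg = (\<lambda>X. qclass M C (hneg M (SOME x. x \<in> X))),
     smul = (\<lambda>r X. qclass M C (smul M r (SOME x. x \<in> X))) \<rparr>"

definition induced_map :: "('b, 'r) hmod \<Rightarrow> 'a set \<Rightarrow> ('a \<Rightarrow> 'b) \<Rightarrow> 'a set \<Rightarrow> 'b set" where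
  "induced_map B C i X = qclass B (i ` C) (i (SOME x. x \<in> X))"

text \<open>Commutative square  P --tp--> Q,  P --lf--> R,  Q --rt--> S,  R --bt--> S
  of H-modules and morphisms.\<close>
definition comm_square ::
  "'r hring \<Rightarrow> ('p, 'r) hmod \<Rightarrow> ('q, 'r) hmod \<Rightarrow> ('s, 'r) hmod \<Rightarrow> ('t, 'r) hmod \<Rightarrow>
   ('p \<Rightarrow> 'q) \<Rightarrow> ('p \<Rightarrow> 's) \<Rightarrow> ('q \<Rightarrow> 't) \<Rightarrow> ('s \<Rightarrow> 't) \<Rightarrow> bool" where
  "comm_square H P Q R S tp lf rt bt \<longleftrightarrow>
     hmodule H P \<and> hmodule H Q \<and> hmodule H R \<and> hmodule H S \<and>
     hmorphism H P Q tp \<and> hmorphism H P R lf \<and>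
     hmorphism H Q S rt \<and> hmorphism H R S bt \<and>
     (\<forall>x\<in>hcarrier P. rt (tp x) = bt (lf x))"

text \<open>Pullback; test objects range over all H-modules with carrier type 'd
  (the type variable is universally quantified at theorem level).\<close>
definition is_pullback ::
  "'r hring \<Rightarrow> ('p, 'r) hmod \<Rightarrow> ('q, 'r) hmod \<Rightarrow> ('s, 'r) hmod \<Rightarrow> ('t, 'r) hmod \<Rightarrow>
   ('p \<Rightarrow> 'q) \<Rightarrow> ('p \<Rightarrow> 's) \<Rightarrow> ('q \<Rightarrow> 't) \<Rightarrow> ('s \<Rightarrow> 't) \<Rightarrow> 'd itself \<Rightarrow> bool" where
  "is_pullback H P Q R S tp lf rt bt (_ :: 'd itself) \<longleftrightarrow>
     comm_square H P Q R S tp lf rt bt \<and>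
     (\<forall>(D :: ('d, 'r) hmod) (f :: 'd \<Rightarrow> 'q) (g :: 'd \<Rightarrow> 's).
        hmodule H D \<and> hmorphism H D Q f \<and> hmorphism H D R g \<and>
        (\<forall>x\<in>hcarrier D. rt (f x) = bt (g x)) \<longrightarrow>
        (\<exists>h. hmorphism H D P h \<and> (\<forall>x\<in>hcarrier D. tp (h x) = f x \<and> lf (h x) = g x) \<and>
           (\<forall>h'. hmorphism H D P h' \<and>
                 (\<forall>x\<in>hcarrier D. tp (h' x) = f x \<and> lf (h' x) = g x) \<longrightarrow>
                 (\<forall>x\<in>hcarrier D. h' x = h x))))"

definition is_pushout ::
  "'r hring \<Rightarrow> ('p, 'r) hmod \<Rightarrow> ('q, 'r) hmod \<Rightarrow> ('s, 'r) hmod \<Rightarrow> ('t, 'r) hmod \<Rightarrow>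
   ('p \<Rightarrow> 'q) \<Rightarrow> ('p \<Rightarrow> 's) \<Rightarrow> ('q \<Rightarrow> 't) \<Rightarrow> ('s \<Rightarrow> 't) \<Rightarrow> 'd itself \<Rightarrow> bool" where
  "is_pushout H P Q R S tp lf rt bt (_ :: 'd itself) \<longleftrightarrow>
     comm_square H P Q R S tp lf rt bt \<and>
     (\<forall>(D :: ('d, 'r) hmod) (f :: 'q \<Rightarrow> 'd) (g :: 's \<Rightarrow> 'd).
        hmodule H D \<and> hmorphism H Q D f \<and> hmorphism H R D g \<and>
        (\<forall>x\<in>hcarrier P. f (tp x) = g (lf x)) \<longrightarrow>
        (\<exists>h. hmorphism H S D h \<and> (\<forall>y\<in>hcarrier Q. h (rt y) = f y) \<and>
             (\<forall>z\<in>hcarrier R. h (bt z) = g z) \<and>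
           (\<forall>h'. hmorphism H S D h' \<and> (\<forall>y\<in>hcarrier Q. h' (rt y) = f y) \<and>
                 (\<forall>z\<in>hcarrier R. h' (bt z) = g z) \<longrightarrow>
                 (\<forall>w\<in>hcarrier S. h' w = h w))))"

end

theory Submission imports Defs begin

locale hg = fixes G :: "('a,'z) hgroup_scheme" assumes hg: "hypergroup G"
begin
abbreviation "car \<equiv> hcarrier G"
abbreviation "pl \<equiv> hadd G"
abbreviation "ng \<equiv> hneg G"
abbreviation "zr \<equiv> hzero G"
lemmas hgd = hg[unfolded hypergroup_def]
lemmas A1 = hgd[THEN conjunct1]
lemmas A2 = hgd[THEN conjunct2, THEN conjunct1]
lemmas A3 = hgd[THEN conjunct2, THEN conjunct2, THEN conjunct1]
lemmas A4 = hgd[THEN conjunct2, THEN conjunct2, THEN conjunct2, THEN conjunct1]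
lemmas A5 = hgd[THEN conjunct2, THEN conjunct2, THEN conjunct2, THEN conjunct2, THEN conjunct1]
lemmas A6 = hgd[THEN conjunct2, THEN conjunct2, THEN conjunct2, THEN conjunct2, THEN conjunct2, THEN conjunct1]
lemmas A7 = hgd[THEN conjunct2, THEN conjunct2, THEN conjunct2, THEN conjunct2, THEN conjunct2, THEN conjunct2, THEN conjunct1]
lemmas A8 = hgd[THEN conjunct2, THEN conjunct2, THEN conjunct2, THEN conjunct2, THEN conjunct2, THEN conjunct2, THEN conjunct2, THEN conjunct1]
lemmas A9 = hgd[THEN conjunct2, THEN conjunct2, THEN conjunct2, THEN conjunct2, THEN conjunct2, THEN conjunct2, THEN conjunct2, THEN conjunct2]

lemma add_closed: "a \<in> car \<Longrightarrow> b \<in> car \<Longrightarrow> pl a b \<subseteq> car"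
  using A1 by blast
lemma add_closed': "a \<in> car \<Longrightarrow> b \<in> car \<Longrightarrow> x \<in> pl a b \<Longrightarrow> x \<in> car"
  using add_closed by blast
lemma add_ne: "a \<in> car \<Longrightarrow> b \<in> car \<Longrightarrow> pl a b \<noteq> {}"
  using A1 by blast
lemma comm: "a \<in> car \<Longrightarrow> b \<in> car \<Longrightarrow> pl a b = pl b a"
  using A2 by blast
lemma zero_in[simp]: "zr \<in> car"
  using A4 by blast
lemma add_zero: "a \<in> car \<Longrightarrow> pl a zr = {a}"
  using A5 by blast
lemma zero_add: "a \<in> car \<Longrightarrow> pl zr a = {a}"
  using add_zero comm zero_in by metis
lemma neg_in: "a \<in> car \<Longrightarrow> ng a \<in> car"
  using A7 by blast
lemma zero_neg: "a \<in> car \<Longrightarrow> zr \<in> pl a (ng a)"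
  using A7 by blast
lemma neg_unique: "a \<in> car \<Longrightarrow> b \<in> car \<Longrightarrow> zr \<in> pl a b \<Longrightarrow> b = ng a"
  using A8 by blast
lemma zero_unique: "z \<in> car \<Longrightarrow> (\<forall>a\<in>car. pl a z = {a}) \<Longrightarrow> z = zr"
  using A6 by blast
lemma rev: "a \<in> car \<Longrightarrow> b \<in> car \<Longrightarrow> c \<in> car \<Longrightarrow> a \<in> pl b c \<Longrightarrow> c \<in> pl a (ng b)"
  using A9 by blast
lemma rev2: "a \<in> car \<Longrightarrow> b \<in> car \<Longrightarrow> c \<in> car \<Longrightarrow> a \<in> pl b c \<Longrightarrow> b \<in> pl a (ng c)"
  using rev comm by metis
lemma assoc_set: "a \<in> car \<Longrightarrow> b \<in> car \<Longrightarrow> c \<in> car \<Longrightarrow>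
   setadd G (pl a b) {c} = setadd G {a} (pl b c)"
  using A3 by blast
lemma assoc1: "a \<in> car \<Longrightarrow> b \<in> car \<Longrightarrow> c \<in> car \<Longrightarrow> u \<in> pl a b \<Longrightarrow> w \<in> pl u c
   \<Longrightarrow> \<exists>v\<in>pl b c. w \<in> pl a v"
proof -
  assume h: "a \<in> car" "b \<in> car" "c \<in> car" "u \<in> pl a b" "w \<in> pl u c"
  then have "w \<in> setadd G (pl a b) {c}" unfolding setadd_def by blast
  then have "w \<in> setadd G {a} (pl b c)" using assoc_set h by simp
  then show ?thesis unfolding setadd_def by blast
qed
lemma assoc2: "a \<in> car \<Longrightarrow> b \<in> car \<Longrightarrow> c \<in> car \<Longrightarrow> v \<in> pl b c \<Longrightarrow> w \<in> pl a v
   \<Longrightarrow> \<exists>u\<in>pl a b. w \<in> pl u c"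
proof -
  assume h: "a \<in> car" "b \<in> car" "c \<in> car" "v \<in> pl b c" "w \<in> pl a v"
  then have "w \<in> setadd G {a} (pl b c)" unfolding setadd_def by blast
  then have "w \<in> setadd G (pl a b) {c}" using assoc_set h by simp
  then show ?thesis unfolding setadd_def by blast
qed
lemma neg_neg: "a \<in> car \<Longrightarrow> ng (ng a) = a"
proof -
  assume a: "a \<in> car"
  have "zr \<in> pl (ng a) a" using zero_neg[OF a] comm[OF a neg_in[OF a]] by simp
  then show ?thesis using neg_unique[OF neg_in[OF a] a] by simp
qed
lemma neg_add: "a \<in> car \<Longrightarrow> b \<in> car \<Longrightarrow> a' \<in> pl a b \<Longrightarrow> ng a' \<in> pl (ng a) (ng b)"
proof -
  assume h: "a \<in> car" "b \<in> car" "a' \<in> pl a b"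
  have a': "a' \<in> car" using add_closed' h by blast
  have "b \<in> pl a' (ng a)" using rev h a' by blast
  then have "ng a \<in> pl b (ng a')" using rev[OF h(2) a' neg_in[OF h(1)]] by blast
  then show ?thesis using rev[OF neg_in[OF h(1)] h(2) neg_in[OF a']] by blast
qed
end


locale qm = fixes H :: "'r hring" and M :: "('a,'r) hmod" and C :: "'a set"
  assumes md: "hmodule H M" and sm: "hsubmodule H M C"
begin
lemmas mdd = md[unfolded hmodule_def]
lemmas B1 = mdd[THEN conjunct1]
lemmas B2 = mdd[THEN conjunct2, THEN conjunct1]
lemmas B3 = mdd[THEN conjunct2, THEN conjunct2, THEN conjunct1]
lemmas B4 = mdd[THEN conjunct2, THEN conjunct2, THEN conjunct2, THEN conjunct1]
lemmas B5 = mdd[THEN conjunct2, THEN conjunct2, THEN conjunct2, THEN conjunct2, THEN conjunct1]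
lemmas B6 = mdd[THEN conjunct2, THEN conjunct2, THEN conjunct2, THEN conjunct2, THEN conjunct2, THEN conjunct1]
lemmas B7 = mdd[THEN conjunct2, THEN conjunct2, THEN conjunct2, THEN conjunct2, THEN conjunct2, THEN conjunct2, THEN conjunct1]
lemmas B8 = mdd[THEN conjunct2, THEN conjunct2, THEN conjunct2, THEN conjunct2, THEN conjunct2, THEN conjunct2, THEN conjunct2]
lemmas sdd = sm[unfolded hsubmodule_def]
lemmas D1 = sdd[THEN conjunct1]
lemmas D2 = sdd[THEN conjunct2, THEN conjunct1]
lemmas D3 = sdd[THEN conjunct2, THEN conjunct2, THEN conjunct1]
lemmas D4 = sdd[THEN conjunct2, THEN conjunct2, THEN conjunct2, THEN conjunct1]
lemmas D5 = sdd[THEN conjunct2, THEN conjunct2, THEN conjunct2, THEN conjunct2]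

lemma hgH: "hypergroup H" using B1 unfolding hyperring_def by (rule conjunct1)
sublocale M: hg M by (rule hg.intro) (rule B2)
sublocale R: hg H by (rule hg.intro) (rule hgH)

lemma C_car: "c \<in> C \<Longrightarrow> c \<in> hcarrier M" using D1 by blast
lemma C_zero: "hzero M \<in> C" using D2 .
lemma C_neg: "c \<in> C \<Longrightarrow> hneg M c \<in> C" using D3 by blast
lemma C_smul: "r \<in> hcarrier H \<Longrightarrow> c \<in> C \<Longrightarrow> smul M r c \<in> C" using D4 by blast
lemma C_add: "a \<in> C \<Longrightarrow> b \<in> C \<Longrightarrow> x \<in> hadd M a b \<Longrightarrow> x \<in> C" using D5 by blast

lemma smul_car: "r \<in> hcarrier H \<Longrightarrow> m \<in> hcarrier M \<Longrightarrow> smul M r m \<in> hcarrier M" using B3 by blast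
lemma smul_one: "m \<in> hcarrier M \<Longrightarrow> smul M (hone H) m = m" using B4 by blast
lemma smul_zero: "m \<in> hcarrier M \<Longrightarrow> smul M (hzero H) m = hzero M" using B5 by blast
lemma smul_assoc: "x \<in> hcarrier H \<Longrightarrow> y \<in> hcarrier H \<Longrightarrow> m \<in> hcarrier M \<Longrightarrow>
   smul M (hmul H x y) m = smul M x (smul M y m)" using B6 by blast
lemma smul_distr: "x \<in> hcarrier H \<Longrightarrow> m1 \<in> hcarrier M \<Longrightarrow> m2 \<in> hcarrier M \<Longrightarrow>
   smul M x ` hadd M m1 m2 = hadd M (smul M x m1) (smul M x m2)" using B7 by blast
lemma smul_distr2: "x \<in> hcarrier H \<Longrightarrow> y \<in> hcarrier H \<Longrightarrow> m \<in> hcarrier M \<Longrightarrow>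
   (\<lambda>r. smul M r m) ` hadd H x y = hadd M (smul M x m) (smul M y m)" using B8 by blast

abbreviation sh where "sh x \<equiv> setadd M {x} C"
lemma sh_mem: "y \<in> sh x \<longleftrightarrow> (\<exists>c\<in>C. y \<in> hadd M x c)" by (auto simp: setadd_def)
lemma sh_self: "x \<in> hcarrier M \<Longrightarrow> x \<in> sh x"
  using M.add_zero C_zero sh_mem by fastforce
lemma sh_car: "x \<in> hcarrier M \<Longrightarrow> y \<in> sh x \<Longrightarrow> y \<in> hcarrier M"
  using sh_mem M.add_closed' C_car by blast
lemma sh_trans: "x \<in> hcarrier M \<Longrightarrow> y \<in> sh x \<Longrightarrow> sh y \<subseteq> sh x"
proof
  fix w assume x: "x \<in> hcarrier M" and y: "y \<in> sh x" and w: "w \<in> sh y"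
  obtain c where c: "c \<in> C" "y \<in> hadd M x c" using y sh_mem by blast
  obtain c' where c': "c' \<in> C" "w \<in> hadd M y c'" using w sh_mem by blast
  obtain v where v: "v \<in> hadd M c c'" "w \<in> hadd M x v"
    using M.assoc1[OF x C_car[OF c(1)] C_car[OF c'(1)] c(2) c'(2)] by blast
  have "v \<in> C" using C_add c c' v by blast
  then show "w \<in> sh x" using v sh_mem by blast
qed
lemma sh_sym: "x \<in> hcarrier M \<Longrightarrow> y \<in> sh x \<Longrightarrow> x \<in> sh y"
proof -
  assume x: "x \<in> hcarrier M" and y: "y \<in> sh x"
  obtain c where c: "c \<in> C" "y \<in> hadd M x c" using y sh_mem by blast
  have "x \<in> hadd M y (hneg M c)" using M.rev2[OF sh_car[OF x y] x C_car[OF c(1)] c(2)] .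
  then show ?thesis using C_neg[OF c(1)] sh_mem by blast
qed
lemma sh_eq_iff: "x \<in> hcarrier M \<Longrightarrow> y \<in> hcarrier M \<Longrightarrow> sh x = sh y \<longleftrightarrow> y \<in> sh x"
proof
  assume x: "x \<in> hcarrier M" and y: "y \<in> hcarrier M"
  { assume "sh x = sh y" then show "y \<in> sh x" using sh_self[OF y] by simp }
  { assume h: "y \<in> sh x"
    have "x \<in> sh y" using sh_sym[OF x h] .
    then show "sh x = sh y" using sh_trans[OF x h] sh_trans[OF y] by blast }
qed
lemma qc_mem: "y \<in> qclass M C x \<longleftrightarrow> y \<in> hcarrier M \<and> sh y = sh x" by (simp add: qclass_def)
lemma qc_eq: "x \<in> hcarrier M \<Longrightarrow> y \<in> hcarrier M \<Longrightarrow> qclass M C x = qclass M C y \<longleftrightarrow> sh x = sh y"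
proof
  assume x: "x \<in> hcarrier M" and y: "y \<in> hcarrier M"
  { assume "qclass M C x = qclass M C y"
    moreover have "x \<in> qclass M C x" using x qc_mem by blast
    ultimately show "sh x = sh y" using qc_mem by blast }
  { assume "sh x = sh y" then show "qclass M C x = qclass M C y" by (simp add: qclass_def) }
qed
lemma qc_eq2: "x \<in> hcarrier M \<Longrightarrow> y \<in> sh x \<Longrightarrow> qclass M C y = qclass M C x"
proof -
  assume x: "x \<in> hcarrier M" and y: "y \<in> sh x"
  have yc: "y \<in> hcarrier M" using sh_car x y .
  have "sh x = sh y" using sh_eq_iff[OF x yc] y by simp
  then show ?thesis using qc_eq[OF yc x] by simp
qed
lemma sh_zero: "sh (hzero M) = C"
  by (auto simp: sh_mem M.zero_add C_car)
lemma sh_neg: "x \<in> hcarrier M \<Longrightarrow> y \<in> sh x \<Longrightarrow> hneg M y \<in> sh (hneg M x)"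
proof -
  assume x: "x \<in> hcarrier M" and y: "y \<in> sh x"
  obtain c where c: "c \<in> C" "y \<in> hadd M x c" using y sh_mem by blast
  have "hneg M y \<in> hadd M (hneg M x) (hneg M c)" using M.neg_add[OF x C_car[OF c(1)] c(2)] .
  then show ?thesis using C_neg[OF c(1)] sh_mem by blast
qed
lemma sh_smul: "r \<in> hcarrier H \<Longrightarrow> x \<in> hcarrier M \<Longrightarrow> y \<in> sh x \<Longrightarrow> smul M r y \<in> sh (smul M r x)"
proof -
  assume r: "r \<in> hcarrier H" and x: "x \<in> hcarrier M" and y: "y \<in> sh x"
  obtain c where c: "c \<in> C" "y \<in> hadd M x c" using y sh_mem by blast
  have "smul M r y \<in> hadd M (smul M r x) (smul M r c)"
    using smul_distr[OF r x C_car[OF c(1)]] c(2) by blast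
  then show ?thesis using C_smul[OF r c(1)] sh_mem by blast
qed
lemma sh_add: "x \<in> hcarrier M \<Longrightarrow> y \<in> hcarrier M \<Longrightarrow> x' \<in> sh x \<Longrightarrow> y' \<in> sh y \<Longrightarrow>
   z \<in> hadd M x' y' \<Longrightarrow> \<exists>t\<in>hadd M x y. z \<in> sh t"
proof -
  assume x: "x \<in> hcarrier M" and y: "y \<in> hcarrier M" and x': "x' \<in> sh x" and y': "y' \<in> sh y"
    and z: "z \<in> hadd M x' y'"
  obtain c1 where c1: "c1 \<in> C" "x' \<in> hadd M x c1" using x' sh_mem by blast
  obtain c2 where c2: "c2 \<in> C" "y' \<in> hadd M y c2" using y' sh_mem by blast
  have x'c: "x' \<in> hcarrier M" using sh_car x x' by blast
  have y'c: "y' \<in> hcarrier M" using sh_car y y' by blast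
  obtain v where v: "v \<in> hadd M c1 y'" "z \<in> hadd M x v"
    using M.assoc1[OF x C_car[OF c1(1)] y'c c1(2) z] by blast
  have v2: "v \<in> hadd M y' c1" using v(1) M.comm[OF C_car[OF c1(1)] y'c] by simp
  obtain u where u: "u \<in> hadd M c2 c1" "v \<in> hadd M y u"
    using M.assoc1[OF y C_car[OF c2(1)] C_car[OF c1(1)] c2(2) v2] by blast
  have uC: "u \<in> C" using C_add c1 c2 u by blast
  obtain t where t: "t \<in> hadd M x y" "z \<in> hadd M t u"
    using M.assoc2[OF x y C_car[OF uC] u(2) v(2)] by blast
  then show ?thesis using uC sh_mem by blast
qed


abbreviation Q where "Q \<equiv> quot M C"
abbreviation qc where "qc \<equiv> qclass M C"

lemma Q_car: "hcarrier Q = qc ` hcarrier M" by (simp add: quot_def)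
lemma Q_zero: "hzero Q = qc (hzero M)" by (simp add: quot_def)
lemma qc_self: "x \<in> hcarrier M \<Longrightarrow> x \<in> qc x" using qc_mem by blast
lemma some_qc: "x \<in> hcarrier M \<Longrightarrow> (SOME z. z \<in> qc x) \<in> qc x"
  using qc_self by (rule someI)
lemma some_sh: "x \<in> hcarrier M \<Longrightarrow> (SOME z. z \<in> qc x) \<in> sh x \<and> (SOME z. z \<in> qc x) \<in> hcarrier M"
proof -
  assume x: "x \<in> hcarrier M"
  have "(SOME z. z \<in> qc x) \<in> qc x" using some_qc[OF x] .
  then have h: "(SOME z. z \<in> qc x) \<in> hcarrier M" "sh (SOME z. z \<in> qc x) = sh x" using qc_mem by blast+
  then show ?thesis using sh_self[OF h(1)] by simp
qed
lemma Q_neg: "x \<in> hcarrier M \<Longrightarrow> hneg Q (qc x) = qc (hneg M x)"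
proof -
  assume x: "x \<in> hcarrier M"
  let ?s = "SOME z. z \<in> qc x"
  have s: "?s \<in> sh x" "?s \<in> hcarrier M" using some_sh[OF x] by blast+
  have "hneg M ?s \<in> sh (hneg M x)" using sh_neg[OF x s(1)] .
  then have "qc (hneg M ?s) = qc (hneg M x)" using qc_eq2 M.neg_in[OF x] by blast
  then show ?thesis by (simp add: quot_def)
qed
lemma Q_smul: "r \<in> hcarrier H \<Longrightarrow> x \<in> hcarrier M \<Longrightarrow> smul Q r (qc x) = qc (smul M r x)"
proof -
  assume r: "r \<in> hcarrier H" and x: "x \<in> hcarrier M"
  let ?s = "SOME z. z \<in> qc x"
  have s: "?s \<in> sh x" "?s \<in> hcarrier M" using some_sh[OF x] by blast+
  have "smul M r ?s \<in> sh (smul M r x)" using sh_smul[OF r x s(1)] .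
  then have "qc (smul M r ?s) = qc (smul M r x)" using qc_eq2 smul_car[OF r x] by blast
  then show ?thesis by (simp add: quot_def)
qed
lemma Q_add: "x \<in> hcarrier M \<Longrightarrow> y \<in> hcarrier M \<Longrightarrow> hadd Q (qc x) (qc y) = qc ` hadd M x y"
proof -
  assume x: "x \<in> hcarrier M" and y: "y \<in> hcarrier M"
  have e: "hadd Q (qc x) (qc y) = {qc z | z x' y'. x' \<in> qc x \<and> y' \<in> qc y \<and> z \<in> hadd M x' y'}"
    by (simp add: quot_def)
  show ?thesis
  proof
    show "qc ` hadd M x y \<subseteq> hadd Q (qc x) (qc y)" unfolding e using qc_self x y by blast
  next
    show "hadd Q (qc x) (qc y) \<subseteq> qc ` hadd M x y"
    proof
      fix W assume "W \<in> hadd Q (qc x) (qc y)"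
      then obtain z x' y' where h: "W = qc z" "x' \<in> qc x" "y' \<in> qc y" "z \<in> hadd M x' y'"
        unfolding e by blast
      have x': "x' \<in> sh x" using h(2) qc_mem sh_self by metis
      have y': "y' \<in> sh y" using h(3) qc_mem sh_self by metis
      obtain t where t: "t \<in> hadd M x y" "z \<in> sh t" using sh_add[OF x y x' y' h(4)] by blast
      have "qc z = qc t" using qc_eq2 t M.add_closed'[OF x y] by blast
      then show "W \<in> qc ` hadd M x y" using h(1) t(1) by blast
    qed
  qed
qed
lemma Q_setadd1: "S \<subseteq> hcarrier M \<Longrightarrow> z \<in> hcarrier M \<Longrightarrow> setadd Q (qc ` S) {qc z} = qc ` setadd M S {z}"
proof -
  assume S: "S \<subseteq> hcarrier M" and z: "z \<in> hcarrier M"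
  have "setadd Q (qc`S) {qc z} = (\<Union>s\<in>S. hadd Q (qc s) (qc z))" by (simp add: setadd_def)
  also have "\<dots> = (\<Union>s\<in>S. qc ` hadd M s z)" using Q_add S z by (intro SUP_cong) auto
  also have "\<dots> = qc ` setadd M S {z}" by (simp add: setadd_def image_UN)
  finally show ?thesis .
qed
lemma Q_setadd2: "S \<subseteq> hcarrier M \<Longrightarrow> z \<in> hcarrier M \<Longrightarrow> setadd Q {qc z} (qc ` S) = qc ` setadd M {z} S"
proof -
  assume S: "S \<subseteq> hcarrier M" and z: "z \<in> hcarrier M"
  have "setadd Q {qc z} (qc`S) = (\<Union>s\<in>S. hadd Q (qc z) (qc s))" by (simp add: setadd_def)
  also have "\<dots> = (\<Union>s\<in>S. qc ` hadd M z s)" using Q_add S z by (intro SUP_cong) auto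
  also have "\<dots> = qc ` setadd M {z} S" by (simp add: setadd_def image_UN)
  finally show ?thesis .
qed


lemma Q_hg: "hypergroup Q"
proof -
  have h1: "\<forall>a\<in>hcarrier M. \<forall>b\<in>hcarrier M. hadd Q (qc a) (qc b) \<noteq> {} \<and> hadd Q (qc a) (qc b) \<subseteq> qc ` hcarrier M"
  proof (intro ballI conjI)
    fix a b assume a: "a \<in> hcarrier M" and b: "b \<in> hcarrier M"
    show "hadd Q (qc a) (qc b) \<noteq> {}" using Q_add[OF a b] M.add_ne[OF a b] by simp
    show "hadd Q (qc a) (qc b) \<subseteq> qc ` hcarrier M" using Q_add[OF a b] M.add_closed[OF a b] by auto
  qed
  have h2: "\<forall>a\<in>hcarrier M. \<forall>b\<in>hcarrier M. hadd Q (qc a) (qc b) = hadd Q (qc b) (qc a)"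
    using Q_add M.comm by simp
  have h3: "\<forall>a\<in>hcarrier M. \<forall>b\<in>hcarrier M. \<forall>c\<in>hcarrier M.
     setadd Q (hadd Q (qc a) (qc b)) {qc c} = setadd Q {qc a} (hadd Q (qc b) (qc c))"
  proof (intro ballI)
    fix a b c assume a: "a \<in> hcarrier M" and b: "b \<in> hcarrier M" and c: "c \<in> hcarrier M"
    have "setadd Q (hadd Q (qc a) (qc b)) {qc c} = qc ` setadd M (hadd M a b) {c}"
      using Q_add[OF a b] Q_setadd1[OF M.add_closed[OF a b] c] by simp
    also have "\<dots> = qc ` setadd M {a} (hadd M b c)" using M.assoc_set[OF a b c] by simp
    also have "\<dots> = setadd Q {qc a} (hadd Q (qc b) (qc c))"
      using Q_add[OF b c] Q_setadd2[OF M.add_closed[OF b c] a] by simp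
    finally show "setadd Q (hadd Q (qc a) (qc b)) {qc c} = setadd Q {qc a} (hadd Q (qc b) (qc c))" .
  qed
  have h4: "hzero Q \<in> qc ` hcarrier M" using Q_zero by simp
  have h5: "\<forall>a\<in>hcarrier M. hadd Q (qc a) (hzero Q) = {qc a}"
    using Q_add Q_zero M.add_zero by simp
  have h6: "\<forall>z\<in>hcarrier M. (\<forall>a\<in>hcarrier M. hadd Q (qc a) (qc z) = {qc a}) \<longrightarrow> qc z = hzero Q"
  proof (intro ballI impI)
    fix z assume z: "z \<in> hcarrier M" and h: "\<forall>a\<in>hcarrier M. hadd Q (qc a) (qc z) = {qc a}"
    have "hadd Q (qc (hzero M)) (qc z) = {qc (hzero M)}" using h by simp
    moreover have "hadd Q (qc (hzero M)) (qc z) = {qc z}" using Q_add[OF M.zero_in z] M.zero_add[OF z] by simp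
    ultimately show "qc z = hzero Q" using Q_zero by simp
  qed
  have h7: "\<forall>a\<in>hcarrier M. hneg Q (qc a) \<in> qc ` hcarrier M \<and> hzero Q \<in> hadd Q (qc a) (hneg Q (qc a))"
    using Q_neg Q_add Q_zero M.neg_in M.zero_neg by auto
  have h8: "\<forall>a\<in>hcarrier M. \<forall>b\<in>hcarrier M. hzero Q \<in> hadd Q (qc a) (qc b) \<longrightarrow> qc b = hneg Q (qc a)"
  proof (intro ballI impI)
    fix a b assume a: "a \<in> hcarrier M" and b: "b \<in> hcarrier M" and h: "hzero Q \<in> hadd Q (qc a) (qc b)"
    obtain z where z: "z \<in> hadd M a b" "qc (hzero M) = qc z" using h Q_add[OF a b] Q_zero by auto
    have zc: "z \<in> hcarrier M" using M.add_closed' a b z(1) by blast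
    have "sh z = C" using z(2) qc_eq[OF M.zero_in zc] sh_zero by simp
    then have zC: "z \<in> C" using sh_self[OF zc] by simp
    have "b \<in> hadd M z (hneg M a)" using M.rev[OF zc a b z(1)] .
    then have "b \<in> hadd M (hneg M a) z" using M.comm[OF zc M.neg_in[OF a]] by simp
    then have "b \<in> sh (hneg M a)" using zC sh_mem by blast
    then have "qc b = qc (hneg M a)" using qc_eq2 M.neg_in[OF a] by blast
    then show "qc b = hneg Q (qc a)" using Q_neg[OF a] by simp
  qed
  have h9: "\<forall>a\<in>hcarrier M. \<forall>b\<in>hcarrier M. \<forall>c\<in>hcarrier M.
      qc a \<in> hadd Q (qc b) (qc c) \<longrightarrow> qc c \<in> hadd Q (qc a) (hneg Q (qc b))"
  proof (intro ballI impI)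
    fix a b c assume a: "a \<in> hcarrier M" and b: "b \<in> hcarrier M" and c: "c \<in> hcarrier M"
      and h: "qc a \<in> hadd Q (qc b) (qc c)"
    obtain t where t: "t \<in> hadd M b c" "qc a = qc t" using h Q_add[OF b c] by auto
    have tc: "t \<in> hcarrier M" using M.add_closed' b c t(1) by blast
    have "c \<in> hadd M t (hneg M b)" using M.rev[OF tc b c t(1)] .
    then have "qc c \<in> hadd Q (qc t) (qc (hneg M b))" using Q_add[OF tc M.neg_in[OF b]] by simp
    then show "qc c \<in> hadd Q (qc a) (hneg Q (qc b))" using t(2) Q_neg[OF b] by simp
  qed
  show ?thesis unfolding hypergroup_def Q_car ball_simps(9)
    apply (intro conjI)
    apply (fact h1) apply (fact h2) apply (fact h3) apply (fact h4) apply (fact h5)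
    apply (fact h6) apply (fact h7) apply (fact h8) apply (fact h9) done
qed


lemmas rdd = B1[unfolded hyperring_def]
lemma mul_car: "x \<in> hcarrier H \<Longrightarrow> y \<in> hcarrier H \<Longrightarrow> hmul H x y \<in> hcarrier H"
  using rdd[THEN conjunct2, THEN conjunct1] by blast
lemma one_car: "hone H \<in> hcarrier H"
  using rdd[THEN conjunct2, THEN conjunct2, THEN conjunct2, THEN conjunct2, THEN conjunct1] .

lemma Q_mod: "hmodule H Q"
proof -
  have h3: "\<forall>r\<in>hcarrier H. \<forall>m\<in>hcarrier M. smul Q r (qc m) \<in> qc ` hcarrier M"
    using Q_smul smul_car by simp
  have h4: "\<forall>m\<in>hcarrier M. smul Q (hone H) (qc m) = qc m"
    using Q_smul one_car smul_one by simp
  have h5: "\<forall>m\<in>hcarrier M. smul Q (hzero H) (qc m) = hzero Q"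
    using Q_smul R.zero_in smul_zero Q_zero by simp
  have h6: "\<forall>x\<in>hcarrier H. \<forall>y\<in>hcarrier H. \<forall>m\<in>hcarrier M.
         smul Q (hmul H x y) (qc m) = smul Q x (smul Q y (qc m))"
    using Q_smul smul_car mul_car smul_assoc by simp
  have h7: "\<forall>x\<in>hcarrier H. \<forall>m1\<in>hcarrier M. \<forall>m2\<in>hcarrier M.
         smul Q x ` hadd Q (qc m1) (qc m2) = hadd Q (smul Q x (qc m1)) (smul Q x (qc m2))"
  proof (intro ballI)
    fix x m1 m2 assume x: "x \<in> hcarrier H" and m1: "m1 \<in> hcarrier M" and m2: "m2 \<in> hcarrier M"
    have "smul Q x ` hadd Q (qc m1) (qc m2) = smul Q x ` qc ` hadd M m1 m2" using Q_add[OF m1 m2] by simp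
    also have "\<dots> = qc ` smul M x ` hadd M m1 m2"
      unfolding image_image using Q_smul[OF x] M.add_closed'[OF m1 m2] by (intro image_cong) auto
    also have "\<dots> = qc ` hadd M (smul M x m1) (smul M x m2)" using smul_distr[OF x m1 m2] by simp
    also have "\<dots> = hadd Q (smul Q x (qc m1)) (smul Q x (qc m2))"
      using Q_add[OF smul_car[OF x m1] smul_car[OF x m2]] Q_smul[OF x m1] Q_smul[OF x m2] by simp
    finally show "smul Q x ` hadd Q (qc m1) (qc m2) = hadd Q (smul Q x (qc m1)) (smul Q x (qc m2))" .
  qed
  have h8: "\<forall>x\<in>hcarrier H. \<forall>y\<in>hcarrier H. \<forall>m\<in>hcarrier M.
         (\<lambda>r. smul Q r (qc m)) ` hadd H x y = hadd Q (smul Q x (qc m)) (smul Q y (qc m))"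
  proof (intro ballI)
    fix x y m assume x: "x \<in> hcarrier H" and y: "y \<in> hcarrier H" and m: "m \<in> hcarrier M"
    have "(\<lambda>r. smul Q r (qc m)) ` hadd H x y = qc ` (\<lambda>r. smul M r m) ` hadd H x y"
      unfolding image_image using Q_smul[OF _ m] R.add_closed'[OF x y] by (intro image_cong) auto
    also have "\<dots> = qc ` hadd M (smul M x m) (smul M y m)" using smul_distr2[OF x y m] by simp
    also have "\<dots> = hadd Q (smul Q x (qc m)) (smul Q y (qc m))"
      using Q_add[OF smul_car[OF x m] smul_car[OF y m]] Q_smul[OF x m] Q_smul[OF y m] by simp
    finally show "(\<lambda>r. smul Q r (qc m)) ` hadd H x y = hadd Q (smul Q x (qc m)) (smul Q y (qc m))" .
  qed
  show ?thesis unfolding hmodule_def Q_car ball_simps(9)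
    apply (intro conjI)
    apply (fact B1) apply (fact Q_hg) apply (fact h3) apply (fact h4) apply (fact h5)
    apply (fact h6) apply (fact h7) apply (fact h8) done
qed

lemma qc_morph: "strict_hmorphism H M Q qc"
  unfolding strict_hmorphism_def hmorphism_def Q_car
  using Q_zero Q_smul Q_add by auto

end


lemma hmod_hg: "hmodule H M \<Longrightarrow> hypergroup M"
  unfolding hmodule_def by blast
lemma hmod_smul_car: "hmodule H M \<Longrightarrow> r \<in> hcarrier H \<Longrightarrow> m \<in> hcarrier M \<Longrightarrow> smul M r m \<in> hcarrier M"
  using hmodule_def[THEN iffD1, THEN conjunct2, THEN conjunct2, THEN conjunct1] by blast
lemma hm_car: "hmorphism H M N f \<Longrightarrow> m \<in> hcarrier M \<Longrightarrow> f m \<in> hcarrier N"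
  unfolding hmorphism_def by blast
lemma hm_zero: "hmorphism H M N f \<Longrightarrow> f (hzero M) = hzero N"
  unfolding hmorphism_def by blast
lemma hm_smul: "hmorphism H M N f \<Longrightarrow> r \<in> hcarrier H \<Longrightarrow> m \<in> hcarrier M \<Longrightarrow> f (smul M r m) = smul N r (f m)"
  unfolding hmorphism_def by blast
lemma hm_add: "hmorphism H M N f \<Longrightarrow> a \<in> hcarrier M \<Longrightarrow> b \<in> hcarrier M \<Longrightarrow> f ` hadd M a b \<subseteq> hadd N (f a) (f b)"
  unfolding hmorphism_def by blast

locale mt = fixes H :: "'r hring" and A :: "('a,'r) hmod" and B :: "('b,'r) hmod"
    and i :: "'a \<Rightarrow> 'b" and C :: "'a set"
  assumes mA: "hmodule H A" and mB: "hmodule H B" and si: "strict_hmorphism H A B i"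
    and ii: "inj_on i (hcarrier A)" and sC: "hsubmodule H A C"
begin
sublocale qA: qm H A C by (intro qm.intro mA sC)

lemmas sid = si[unfolded strict_hmorphism_def hmorphism_def]
lemma i_car: "a \<in> hcarrier A \<Longrightarrow> i a \<in> hcarrier B" using sid by blast
lemma i_zero: "i (hzero A) = hzero B" using sid by blast
lemma i_smul: "r \<in> hcarrier H \<Longrightarrow> a \<in> hcarrier A \<Longrightarrow> i (smul A r a) = smul B r (i a)" using sid by blast
lemma i_add: "a \<in> hcarrier A \<Longrightarrow> b \<in> hcarrier A \<Longrightarrow> i ` hadd A a b = hadd B (i a) (i b)" using sid by blast
lemma i_morph: "hmorphism H A B i" using si unfolding strict_hmorphism_def by blast

lemma hgB: "hypergroup B" using mB by (rule hmod_hg)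
interpretation MB: hg B by (intro hg.intro hgB)

lemma i_neg: "a \<in> hcarrier A \<Longrightarrow> i (hneg A a) = hneg B (i a)"
proof -
  assume a: "a \<in> hcarrier A"
  have "hzero B \<in> hadd B (i a) (i (hneg A a))"
    using i_add[OF a qA.M.neg_in[OF a]] qA.M.zero_neg[OF a] i_zero by (metis imageI)
  then show ?thesis using MB.neg_unique i_car a qA.M.neg_in by metis
qed

lemma subB: "hsubmodule H B (i ` C)"
  unfolding hsubmodule_def
proof (intro conjI ballI subsetI)
  show "x \<in> hcarrier B" if "x \<in> i ` C" for x using that i_car qA.C_car by blast
  show "hzero B \<in> i ` C" using i_zero qA.C_zero by (metis imageI)
  show "hneg B a \<in> i ` C" if a: "a \<in> i ` C" for a
  proof -
    obtain c where c: "c \<in> C" "a = i c" using a by blast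
    then show ?thesis using i_neg[OF qA.C_car[OF c(1)]] qA.C_neg[OF c(1)] by (metis imageI)
  qed
  show "smul B r a \<in> i ` C" if r: "r \<in> hcarrier H" and a: "a \<in> i ` C" for r a
  proof -
    obtain c where c: "c \<in> C" "a = i c" using a by blast
    then show ?thesis using i_smul[OF r qA.C_car[OF c(1)]] qA.C_smul[OF r c(1)] by (metis imageI)
  qed
  show "x \<in> i ` C" if h: "a \<in> i ` C" "b \<in> i ` C" "x \<in> hadd B a b" for a b x
  proof -
    obtain c1 c2 where c: "c1 \<in> C" "c2 \<in> C" "a = i c1" "b = i c2" using h(1,2) by blast
    have "x \<in> i ` hadd A c1 c2" using h(3) i_add qA.C_car c by simp
    then show ?thesis using qA.C_add c by blast
  qed
qed

sublocale qB: qm H B "i ` C" by (intro qm.intro mB subB)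

lemma sh_i: "a \<in> hcarrier A \<Longrightarrow> setadd B {i a} (i ` C) = i ` setadd A {a} C"
proof -
  assume a: "a \<in> hcarrier A"
  have "setadd B {i a} (i ` C) = (\<Union>c\<in>C. hadd B (i a) (i c))" by (simp add: setadd_def)
  also have "\<dots> = (\<Union>c\<in>C. i ` hadd A a c)" using i_add a qA.C_car by simp
  also have "\<dots> = i ` setadd A {a} C" by (simp add: setadd_def image_UN)
  finally show ?thesis .
qed

lemma qc_i_iff: "x \<in> hcarrier A \<Longrightarrow> y \<in> hcarrier A \<Longrightarrow>
   qclass B (i ` C) (i x) = qclass B (i ` C) (i y) \<longleftrightarrow> qclass A C x = qclass A C y"
proof -
  assume x: "x \<in> hcarrier A" and y: "y \<in> hcarrier A"
  have sx: "setadd A {x} C \<subseteq> hcarrier A" using qA.sh_car x by blast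
  have sy: "setadd A {y} C \<subseteq> hcarrier A" using qA.sh_car y by blast
  have "qclass B (i ` C) (i x) = qclass B (i ` C) (i y) \<longleftrightarrow>
      i ` setadd A {x} C = i ` setadd A {y} C"
    using qB.qc_eq[OF i_car[OF x] i_car[OF y]] sh_i x y by simp
  also have "\<dots> \<longleftrightarrow> setadd A {x} C = setadd A {y} C"
    using inj_on_image_eq_iff[OF ii sx sy] .
  also have "\<dots> \<longleftrightarrow> qclass A C x = qclass A C y" using qA.qc_eq[OF x y] by simp
  finally show ?thesis .
qed

abbreviation im where "im \<equiv> induced_map B C i"

lemma im_qc: "x \<in> hcarrier A \<Longrightarrow> im (qclass A C x) = qclass B (i ` C) (i x)"
proof -
  assume x: "x \<in> hcarrier A"
  let ?s = "SOME z. z \<in> qclass A C x"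
  have s: "?s \<in> qclass A C x" using qA.some_qc[OF x] .
  then have sc: "?s \<in> hcarrier A" "qclass A C ?s = qclass A C x" using qA.qc_mem qA.qc_eq x by blast+
  then show ?thesis unfolding induced_map_def using qc_i_iff[OF sc(1) x] by simp
qed


lemma im_strict: "strict_hmorphism H (quot A C) (quot B (i ` C)) im"
proof -
  have h1: "\<forall>m\<in>hcarrier A. im (qclass A C m) \<in> qclass B (i ` C) ` hcarrier B"
    using im_qc i_car by simp
  have h2: "im (hzero (quot A C)) = hzero (quot B (i ` C))"
    using qA.Q_zero qB.Q_zero im_qc qA.M.zero_in i_zero by simp
  have h3: "\<forall>r\<in>hcarrier H. \<forall>m\<in>hcarrier A.
      im (smul (quot A C) r (qclass A C m)) = smul (quot B (i ` C)) r (im (qclass A C m))"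
    using qA.Q_smul qB.Q_smul im_qc qA.smul_car i_smul i_car by simp
  have h4: "\<forall>a\<in>hcarrier A. \<forall>b\<in>hcarrier A. im ` hadd (quot A C) (qclass A C a) (qclass A C b)
      = hadd (quot B (i ` C)) (im (qclass A C a)) (im (qclass A C b))"
  proof (intro ballI)
    fix a b assume a: "a \<in> hcarrier A" and b: "b \<in> hcarrier A"
    have "im ` hadd (quot A C) (qclass A C a) (qclass A C b) = im ` qclass A C ` hadd A a b"
      using qA.Q_add[OF a b] by simp
    also have "\<dots> = qclass B (i ` C) ` i ` hadd A a b"
      unfolding image_image using im_qc qA.M.add_closed'[OF a b] by (intro image_cong) auto
    also have "\<dots> = hadd (quot B (i ` C)) (im (qclass A C a)) (im (qclass A C b))"
      using i_add[OF a b] qB.Q_add[OF i_car[OF a] i_car[OF b]] im_qc a b by simp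
    finally show "im ` hadd (quot A C) (qclass A C a) (qclass A C b)
      = hadd (quot B (i ` C)) (im (qclass A C a)) (im (qclass A C b))" .
  qed
  show ?thesis unfolding strict_hmorphism_def hmorphism_def qA.Q_car qB.Q_car ball_simps(9)
    using h1 h2 h3 h4 by simp
qed

lemma im_inj: "inj_on im (hcarrier (quot A C))"
  unfolding qA.Q_car
proof (rule inj_onI)
  fix X Y assume X: "X \<in> qclass A C ` hcarrier A" and Y: "Y \<in> qclass A C ` hcarrier A" and e: "im X = im Y"
  obtain x y where xy: "x \<in> hcarrier A" "y \<in> hcarrier A" "X = qclass A C x" "Y = qclass A C y" using X Y by blast
  then show "X = Y" using e im_qc qc_i_iff by simp
qed

lemma csq: "comm_square H A B (quot A C) (quot B (i ` C)) i (qclass A C) (qclass B (i ` C)) im"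
  unfolding comm_square_def using mA mB qA.Q_mod qB.Q_mod i_morph qA.qc_morph qB.qc_morph im_strict im_qc
  unfolding strict_hmorphism_def by simp


lemma pullback: "is_pullback H A B (quot A C) (quot B (i ` C)) i (qclass A C) (qclass B (i ` C)) im TYPE('d)"
  unfolding is_pullback_def
proof (intro conjI allI impI)
  show "comm_square H A B (quot A C) (quot B (i ` C)) i (qclass A C) (qclass B (i ` C)) im" by (rule csq)
next
  fix D :: "('d,'r) hmod" and f g
  assume hh: "hmodule H D \<and> hmorphism H D B f \<and> hmorphism H D (quot A C) g \<and>
     (\<forall>x\<in>hcarrier D. qclass B (i ` C) (f x) = im (g x))"
  then have mD: "hmodule H D" and f: "hmorphism H D B f" and g: "hmorphism H D (quot A C) g"
    and fg: "\<And>x. x \<in> hcarrier D \<Longrightarrow> qclass B (i ` C) (f x) = im (g x)" by blast+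
  interpret DD: hg D by (intro hg.intro hmod_hg[OF mD])
  define h where "h x = inv_into (hcarrier A) i (f x)" for x
  have key: "h x \<in> hcarrier A \<and> i (h x) = f x \<and> qclass A C (h x) = g x" if x: "x \<in> hcarrier D" for x
  proof -
    have "g x \<in> qclass A C ` hcarrier A" using hm_car[OF g x] qA.Q_car by simp
    then obtain a where a: "a \<in> hcarrier A" "g x = qclass A C a" by blast
    have fx: "f x \<in> hcarrier B" using hm_car[OF f x] .
    have "qclass B (i ` C) (f x) = qclass B (i ` C) (i a)" using fg[OF x] a im_qc by simp
    then have "setadd B {f x} (i ` C) = setadd B {i a} (i ` C)" using qB.qc_eq[OF fx i_car[OF a(1)]] by simp
    then have "f x \<in> i ` setadd A {a} C" using qB.sh_self[OF fx] sh_i[OF a(1)] by simp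
    then obtain a' where a': "a' \<in> setadd A {a} C" "f x = i a'" by blast
    have a'c: "a' \<in> hcarrier A" using qA.sh_car a(1) a'(1) by blast
    have "h x = a'" unfolding h_def a'(2) using inv_into_f_f[OF ii a'c] .
    moreover have "qclass A C a' = qclass A C a" using qA.qc_eq2[OF a(1) a'(1)] .
    ultimately show ?thesis using a'c a'(2) a(2) by simp
  qed
  have hinj: "u = v" if "u \<in> hcarrier A" "v \<in> hcarrier A" "i u = i v" for u v
    using ii that inj_onD by metis
  have hm: "hmorphism H D A h"
    unfolding hmorphism_def
  proof (intro conjI ballI subsetI)
    show "h m \<in> hcarrier A" if "m \<in> hcarrier D" for m using key that by blast
    show "h (hzero D) = hzero A"
    proof -
      have "i (h (hzero D)) = i (hzero A)" using key[OF DD.zero_in] hm_zero[OF f] i_zero by simp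
      then show ?thesis using hinj[OF _ qA.M.zero_in] key[OF DD.zero_in] by blast
    qed
    show "h (smul D r m) = smul A r (h m)" if r: "r \<in> hcarrier H" and m: "m \<in> hcarrier D" for r m
    proof -
      have rm: "smul D r m \<in> hcarrier D" using hmod_smul_car[OF mD r m] .
      have "i (h (smul D r m)) = f (smul D r m)" using key[OF rm] by simp
      also have "\<dots> = smul B r (f m)" using hm_smul[OF f r m] .
      also have "\<dots> = i (smul A r (h m))" using i_smul[OF r] key[OF m] by simp
      finally show ?thesis using hinj key[OF rm] qA.smul_car[OF r] key[OF m] by blast
    qed
    show "z \<in> hadd A (h a) (h b)" if z: "z \<in> h ` hadd D a b" and a: "a \<in> hcarrier D" and b: "b \<in> hcarrier D" for z a b
    proof -
      obtain w where w: "w \<in> hadd D a b" "z = h w" using z by blast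
      have wc: "w \<in> hcarrier D" using DD.add_closed' a b w(1) by blast
      have "f w \<in> hadd B (f a) (f b)" using hm_add[OF f a b] w(1) by blast
      also have "\<dots> = i ` hadd A (h a) (h b)" using i_add key[OF a] key[OF b] by simp
      finally obtain u where u: "u \<in> hadd A (h a) (h b)" "f w = i u" by blast
      have uc: "u \<in> hcarrier A" using qA.M.add_closed' key[OF a] key[OF b] u(1) by blast
      have "h w = u" using hinj key[OF wc] uc u(2) by metis
      then show ?thesis using w u by simp
    qed
  qed
  show "\<exists>h. hmorphism H D A h \<and> (\<forall>x\<in>hcarrier D. i (h x) = f x \<and> qclass A C (h x) = g x) \<and>
           (\<forall>h'. hmorphism H D A h' \<and>
                 (\<forall>x\<in>hcarrier D. i (h' x) = f x \<and> qclass A C (h' x) = g x) \<longrightarrow>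
                 (\<forall>x\<in>hcarrier D. h' x = h x))"
  proof (intro exI conjI allI impI ballI)
    show "hmorphism H D A h" by (rule hm)
    show "i (h x) = f x" if "x \<in> hcarrier D" for x using key that by blast
    show "qclass A C (h x) = g x" if "x \<in> hcarrier D" for x using key that by blast
    show "h' x = h x" if h': "hmorphism H D A h' \<and>
                 (\<forall>x\<in>hcarrier D. i (h' x) = f x \<and> qclass A C (h' x) = g x)" and x: "x \<in> hcarrier D" for h' x
      using hinj[OF hm_car[of H D A h' x] key[OF x, THEN conjunct1]] h' x key[OF x] by simp
  qed
qed


lemma pushout: "is_pushout H A B (quot A C) (quot B (i ` C)) i (qclass A C) (qclass B (i ` C)) im TYPE('e)"
  unfolding is_pushout_def
proof (intro conjI allI impI)
  show "comm_square H A B (quot A C) (quot B (i ` C)) i (qclass A C) (qclass B (i ` C)) im" by (rule csq)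
next
  fix D :: "('e,'r) hmod" and f g
  assume hh: "hmodule H D \<and> hmorphism H B D f \<and> hmorphism H (quot A C) D g \<and>
     (\<forall>x\<in>hcarrier A. f (i x) = g (qclass A C x))"
  then have mD: "hmodule H D" and f: "hmorphism H B D f" and g: "hmorphism H (quot A C) D g"
    and fg: "\<And>x. x \<in> hcarrier A \<Longrightarrow> f (i x) = g (qclass A C x)" by blast+
  interpret DD: hg D by (intro hg.intro hmod_hg[OF mD])
  define k where "k X = f (SOME y. y \<in> X)" for X
  have fC: "f (i c) = hzero D" if c: "c \<in> C" for c
  proof -
    have cc: "c \<in> hcarrier A" using qA.C_car c .
    have "c \<in> setadd A {hzero A} C" using qA.sh_zero c by simp
    then have "qclass A C c = qclass A C (hzero A)" using qA.qc_eq2[OF qA.M.zero_in] by blast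
    then show ?thesis using fg[OF cc] hm_zero[OF g] qA.Q_zero by simp
  qed
  have const: "f y' = f y" if y: "y \<in> hcarrier B" and y': "y' \<in> setadd B {y} (i ` C)" for y y'
  proof -
    obtain c' where c': "c' \<in> i ` C" "y' \<in> hadd B y c'" using y' qB.sh_mem by blast
    obtain c where c: "c \<in> C" "c' = i c" using c'(1) by blast
    have "f y' \<in> hadd D (f y) (f c')" using hm_add[OF f y qB.C_car[OF c'(1)]] c'(2) by blast
    also have "\<dots> = {f y}" using c fC DD.add_zero hm_car[OF f y] by simp
    finally show ?thesis by simp
  qed
  have kq: "k (qclass B (i ` C) y) = f y" if y: "y \<in> hcarrier B" for y
    unfolding k_def using const[OF y] qB.some_sh[OF y] by blast
  have km: "hmorphism H (quot B (i ` C)) D k"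
    unfolding hmorphism_def qB.Q_car ball_simps(9)
  proof (intro conjI ballI subsetI)
    show "k (qclass B (i ` C) m) \<in> hcarrier D" if "m \<in> hcarrier B" for m
      using kq hm_car[OF f] that by simp
    show "k (hzero (quot B (i ` C))) = hzero D"
      using qB.Q_zero kq[OF MB.zero_in] hm_zero[OF f] by simp
    show "k (smul (quot B (i ` C)) r (qclass B (i ` C) m)) = smul D r (k (qclass B (i ` C) m))"
      if r: "r \<in> hcarrier H" and m: "m \<in> hcarrier B" for r m
      using qB.Q_smul[OF r m] kq[OF qB.smul_car[OF r m]] kq[OF m] hm_smul[OF f r m] by simp
    show "z \<in> hadd D (k (qclass B (i ` C) a)) (k (qclass B (i ` C) b))"
      if z: "z \<in> k ` hadd (quot B (i ` C)) (qclass B (i ` C) a) (qclass B (i ` C) b)"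
        and a: "a \<in> hcarrier B" and b: "b \<in> hcarrier B" for z a b
    proof -
      obtain w where w: "w \<in> hadd B a b" "z = k (qclass B (i ` C) w)" using z qB.Q_add[OF a b] by auto
      have "z = f w" using w kq MB.add_closed'[OF a b] by simp
      then have "z \<in> hadd D (f a) (f b)" using hm_add[OF f a b] w(1) by blast
      then show ?thesis using kq a b by simp
    qed
  qed
  show "\<exists>h. hmorphism H (quot B (i ` C)) D h \<and> (\<forall>y\<in>hcarrier B. h (qclass B (i ` C) y) = f y) \<and>
             (\<forall>z\<in>hcarrier (quot A C). h (im z) = g z) \<and>
           (\<forall>h'. hmorphism H (quot B (i ` C)) D h' \<and> (\<forall>y\<in>hcarrier B. h' (qclass B (i ` C) y) = f y) \<and>
                 (\<forall>z\<in>hcarrier (quot A C). h' (im z) = g z) \<longrightarrow>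
                 (\<forall>w\<in>hcarrier (quot B (i ` C)). h' w = h w))"
  proof (intro exI conjI allI impI ballI)
    show "hmorphism H (quot B (i ` C)) D k" by (rule km)
    show "k (qclass B (i ` C) y) = f y" if "y \<in> hcarrier B" for y using kq that .
    show "k (im z) = g z" if z: "z \<in> hcarrier (quot A C)" for z
    proof -
      obtain a where a: "a \<in> hcarrier A" "z = qclass A C a" using z qA.Q_car by auto
      then show ?thesis using im_qc kq i_car fg by simp
    qed
    show "h' w = k w" if h': "hmorphism H (quot B (i ` C)) D h' \<and> (\<forall>y\<in>hcarrier B. h' (qclass B (i ` C) y) = f y) \<and>
                 (\<forall>z\<in>hcarrier (quot A C). h' (im z) = g z)" and w: "w \<in> hcarrier (quot B (i ` C))" for h' w
    proof -
      obtain y where y: "y \<in> hcarrier B" "w = qclass B (i ` C) y" using w qB.Q_car by auto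
      then show ?thesis using h' kq by simp
    qed
  qed
qed

end

theorem mainTheorem20:
  fixes H :: "'r hring"
    and A :: "('a, 'r) hmod" and B :: "('b, 'r) hmod"
    and i :: "'a \<Rightarrow> 'b" and C :: "'a set"
  assumes "hyperring H"
    and "hmodule H A" and "hmodule H B"
    and "strict_hmorphism H A B i" and "inj_on i (hcarrier A)"
    and "hsubmodule H A C"
  shows "(\<forall>x\<in>hcarrier A. \<forall>y\<in>hcarrier A. qclass A C x = qclass A C y \<longrightarrow>
            qclass B (i ` C) (i x) = qclass B (i ` C) (i y))
     \<and> (\<forall>x\<in>hcarrier A. induced_map B C i (qclass A C x) = qclass B (i ` C) (i x))
     \<and> strict_hmorphism H (quot A C) (quot B (i ` C)) (induced_map B C i)
     \<and> inj_on (induced_map B C i) (hcarrier (quot A C))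
     \<and> is_pullback H A B (quot A C) (quot B (i ` C)) i (qclass A C) (qclass B (i ` C))
          (induced_map B C i) TYPE('d)
     \<and> is_pushout H A B (quot A C) (quot B (i ` C)) i (qclass A C) (qclass B (i ` C))
          (induced_map B C i) TYPE('e)"
proof -
  interpret mt H A B i C by (intro mt.intro assms)
  show ?thesis using qc_i_iff im_qc im_strict im_inj pullback pushout by blast
qed

end
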